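(* For $A,x\in\mathbb{R}$ define $E_0(A,x):=1$, $E_1(A,x):=e^{(1-x)A}$ and, for $n\ge2$, \[ E_n(A,x):=\begin{cases} \exp\!\Big(\big[x(E_1+E_3+\cdots+E_{n-1})-\tfrac n2\big]A\Big), & n \text{ even},\\[4pt] \exp\!\Big(\big[\tfrac{n+1}{2}-x(E_0+E_2+\cdots+E_{n-1})\big]A\Big), & n\text{ odd},\end{cases} \] with all $E_j$ evaluated at $(A,x)$. Define $\varphi_1(A,x):=x-1$, $\varphi_n(A,x):=\varphi_{n-1}(A,x)-1+xE_{n-1}(A,x)$ for $n\ge2$, and the polynomial $p_n(A):=\frac{\partial\varphi_n}{\partial x}(A,1)$. Then for every integer $n\ge1$, $\deg p_n=n-1$; moreover the leading coefficient of $p_n$ equals $1$ if $n\equiv0$ or $n\equiv1\pmod 4$, and equals $-1$ if $n\equiv2$ or $n\equiv3\pmod4$. *)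

theory Defs
  imports Complex_Main "HOL-Computational_Algebra.Polynomial"
begin

function E :: "real \<Rightarrow> real \<Rightarrow> nat \<Rightarrow> real" where
  "E A x n =
     (if n = 0 then 1
      else if n = 1 then exp ((1 - x) * A)
      else if even n then
        exp ((x * (\<Sum>j\<in>{j. j < n \<and> odd j}. E A x j) - real n / 2) * A)
      else
        exp ((real (n + 1) / 2 - x * (\<Sum>j\<in>{j. j < n \<and> even j}. E A x j)) * A))"
  by pat_completeness auto
termination by (relation "measure (\<lambda>(A, x, n). n)") auto

(* phi A x n = \<phi>_n(A,x), meaningful for n \<ge> 1 *)
fun phi :: "real \<Rightarrow> real \<Rightarrow> nat \<Rightarrow> real" where
  "phi A x 0 = 0"
| "phi A x (Suc 0) = x - 1"
| "phi A x (Suc (Suc m)) = phi A x (Suc m) - 1 + x * E A x (Suc m)"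

end

theory Submission imports Defs begin

declare E.simps[simp del]

lemma m4a: "(n::nat) \<ge> 1 \<Longrightarrow> n mod 4 = 0 \<Longrightarrow> (n-1) mod 4 = 3" by (cases n) (auto simp: mod_Suc split: if_splits)
lemma m4b: "(n::nat) \<ge> 1 \<Longrightarrow> n mod 4 = 2 \<Longrightarrow> (n-1) mod 4 = 1" by (cases n) (auto simp: mod_Suc split: if_splits)
lemma m4c: "(n::nat) \<ge> 1 \<Longrightarrow> n mod 4 = 1 \<Longrightarrow> (n-1) mod 4 = 0" by (cases n) (auto simp: mod_Suc split: if_splits)
lemma m4d: "(n::nat) \<ge> 1 \<Longrightarrow> n mod 4 = 3 \<Longrightarrow> (n-1) mod 4 = 2" by (cases n) (auto simp: mod_Suc split: if_splits)
lemma m4e: "even (n::nat) \<Longrightarrow> n mod 4 = 0 \<or> n mod 4 = 2" by presburger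
lemma m4f: "odd (n::nat) \<Longrightarrow> n mod 4 = 1 \<or> n mod 4 = 3" by presburger
lemma m4g: "n \<ge> 2 \<Longrightarrow> even (n::nat) \<Longrightarrow> odd (n-1)" by presburger
lemma m4h: "n \<ge> 2 \<Longrightarrow> odd (n::nat) \<Longrightarrow> even (n-1)" by presburger
lemma m4i: "(Suc m mod 4 = 1 \<or> Suc m mod 4 = 2) \<longleftrightarrow> \<not> (Suc (Suc m) mod 4 = 0 \<or> Suc (Suc m) mod 4 = 1)" by presburger

lemma card_odd: "card {j::nat. j<n \<and> odd j} = n div 2"
proof (induction n)
  case 0 then show ?case by simp
next
  case (Suc n)
  have "{j. j<Suc n \<and> odd j} = {j. j<n \<and> odd j} \<union> (if odd n then {n} else {})"
    by (auto simp: less_Suc_eq)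
  then show ?case using Suc by (auto simp: card_insert_if)
qed

lemma card_even: "card {j::nat. j<n \<and> even j} = (n+1) div 2"
proof (induction n)
  case 0 then show ?case by simp
next
  case (Suc n)
  have "{j. j<Suc n \<and> even j} = {j. j<n \<and> even j} \<union> (if even n then {n} else {})"
    by (auto simp: less_Suc_eq)
  then show ?case using Suc by (auto simp: card_insert_if)
qed

lemma E_even: "even n \<Longrightarrow> n \<noteq> 0 \<Longrightarrow> E A x n = exp ((x * (\<Sum>j\<in>{j. j < n \<and> odd j}. E A x j) - real n / 2) * A)"
  by (subst E.simps) auto
lemma E_odd: "odd n \<Longrightarrow> n \<noteq> 1 \<Longrightarrow> E A x n = exp ((real (n + 1) / 2 - x * (\<Sum>j\<in>{j. j < n \<and> even j}. E A x j)) * A)"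
  by (subst E.simps) auto
lemma E_0: "E A x 0 = 1" by (subst E.simps) simp
lemma E_1: "E A x 1 = exp ((1 - x) * A)" by (subst E.simps) simp

lemma E_at1: "E A 1 n = 1"
proof (induction n rule: less_induct)
  case (less n)
  consider "n = 0" | "n = 1" | "even n" "n \<noteq> 0" | "odd n" "n \<noteq> 1" by blast
  then show ?case
  proof cases
    case 1 then show ?thesis by (simp add: E_0)
  next
    case 2 then show ?thesis using E_1[of A 1] by simp
  next
    case 3
    have "(\<Sum>j\<in>{j. j < n \<and> odd j}. E A 1 j) = real (card {j. j < n \<and> odd j})"
      using less by simp
    also have "\<dots> = real n / 2" using 3 by (simp add: card_odd real_of_nat_div)
    finally show ?thesis using 3 by (simp add: E_even)
  next
    case 4
    have "(\<Sum>j\<in>{j. j < n \<and> even j}. E A 1 j) = real (card {j. j < n \<and> even j})"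
      using less by simp
    also have "\<dots> = real (n+1) / 2" using 4 unfolding card_even by (subst real_of_nat_div) auto
    finally show ?thesis using 4 by (simp add: E_odd)
  qed
qed

function ep :: "nat \<Rightarrow> real poly" where
 "ep n = (if even n then pCons 0 ([:real n / 2:] + (\<Sum>j\<in>{j. j<n \<and> odd j}. ep j))
          else - pCons 0 ([:real (n+1)/2:] + (\<Sum>j\<in>{j. j<n \<and> even j}. ep j)))"
  by pat_completeness auto
termination by (relation "measure id") auto

declare ep.simps[simp del]

lemma E_deriv: "((\<lambda>x. E A x n) has_real_derivative poly (ep n) A) (at 1)"
proof (induction n rule: less_induct)
  case (less n)
  consider "n = 0" | "even n" "n \<noteq> 0" | "odd n" by blast
  then show ?case
  proof cases
    case 1
    have "ep 0 = 0" by (subst ep.simps) simp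
    then show ?thesis using 1 by (simp add: E_0)
  next
    case 2
    let ?S = "{j. j < n \<and> odd j}"
    have fin: "finite ?S" by simp
    have ds: "((\<lambda>x. \<Sum>j\<in>?S. E A x j) has_real_derivative (\<Sum>j\<in>?S. poly (ep j) A)) (at 1)"
      by (rule DERIV_sum) (use less in auto)
    have s1: "(\<Sum>j\<in>?S. E A 1 j) = real n / 2"
      using 2 by (simp add: E_at1 card_odd real_of_nat_div)
    have e: "(\<lambda>x. E A x n) = (\<lambda>x. exp ((x * (\<Sum>j\<in>?S. E A x j) - real n / 2) * A))"
      using 2 by (simp add: E_even)
    have p: "poly (ep n) A = A * (real n / 2 + (\<Sum>j\<in>?S. poly (ep j) A))"
      using 2 by (subst ep.simps) (simp add: poly_sum)
    show ?thesis unfolding e p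
      by (rule ds derivative_eq_intros refl | simp add: s1)+
  next
    case 3
    let ?S = "{j. j < n \<and> even j}"
    have ds: "((\<lambda>x. \<Sum>j\<in>?S. E A x j) has_real_derivative (\<Sum>j\<in>?S. poly (ep j) A)) (at 1)"
      by (rule DERIV_sum) (use less in auto)
    have s1: "(\<Sum>j\<in>?S. E A 1 j) = real (n+1) / 2"
    proof -
      have "real (card ?S) = real (n+1)/2" using 3 unfolding card_even by (subst real_of_nat_div) auto
      then show ?thesis by (simp add: E_at1)
    qed
    have e: "(\<lambda>x. E A x n) = (\<lambda>x. exp ((real (n + 1) / 2 - x * (\<Sum>j\<in>?S. E A x j)) * A))"
    proof
      fix x show "E A x n = exp ((real (n + 1) / 2 - x * (\<Sum>j\<in>?S. E A x j)) * A)"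
      proof (cases "n = 1")
        case True
        have "?S = {0}" using True by auto
        then show ?thesis using True E_1[of A x] by (simp add: E_0 algebra_simps)
      qed (use 3 E_odd in auto)
    qed
    have p: "poly (ep n) A = - A * (real (n+1) / 2 + (\<Sum>j\<in>?S. poly (ep j) A))"
      using 3 by (subst ep.simps) (simp add: poly_sum algebra_simps)
    show ?thesis unfolding e p
      by (rule ds derivative_eq_intros refl | simp add: s1 algebra_simps)+
  qed
qed


lemma ep_0: "ep 0 = 0" by (subst ep.simps) simp

lemma sum_helper:
  assumes fin: "finite S" and mS: "m \<in> S" and m1: "m \<ge> 1"
    and le: "\<And>j. j \<in> S \<Longrightarrow> j \<le> m"
    and dle: "\<And>j. j \<in> S \<Longrightarrow> degree (ep j) \<le> j"
    and dm: "degree (ep m) = m"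
  shows "degree ([:c:] + (\<Sum>j\<in>S. ep j)) = m \<and>
         lead_coeff ([:c:] + (\<Sum>j\<in>S. ep j)) = lead_coeff (ep m)"
proof -
  let ?r = "[:c:] + (\<Sum>j\<in>S-{m}. ep j)"
  have eq: "[:c:] + (\<Sum>j\<in>S. ep j) = ?r + ep m"
    using fin mS by (simp add: sum.remove algebra_simps)
  have "degree (\<Sum>j\<in>S-{m}. ep j) \<le> m - 1"
  proof (rule degree_sum_le)
    show "finite (S - {m})" using fin by simp
    fix j assume "j \<in> S - {m}"
    then have "j < m" "degree (ep j) \<le> j" using le dle by force+
    then show "degree (ep j) \<le> m - 1" by linarith
  qed
  then have "degree ?r \<le> m - 1"
    by (intro degree_add_le) auto
  then have lt: "degree ?r < degree (ep m)" using dm m1 by linarith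
  show ?thesis unfolding eq
    using degree_add_eq_right[OF lt] lead_coeff_add_le[OF lt] dm by (simp only:)
qed

lemma ep_deg: "n \<ge> 1 \<Longrightarrow> degree (ep n) = n \<and>
   lead_coeff (ep n) = (if n mod 4 = 1 \<or> n mod 4 = 2 then -1 else 1)"
proof (induction n rule: less_induct)
  case (less n)
  have dle: "degree (ep j) \<le> j" if "j < n" for j
    using less.IH[OF that] by (cases "j = 0") (auto simp: ep_0)
  show ?case
  proof (cases "n = 1")
    case True
    have "ep 1 = - pCons 0 1"
      by (subst ep.simps) (simp add: ep_0 one_pCons)
    then show ?thesis using True by simp
  next
    case False
    then have n2: "n \<ge> 2" using less.prems by simp
    have IHm: "degree (ep (n-1)) = n-1 \<and> lead_coeff (ep (n-1)) =
       (if (n-1) mod 4 = 1 \<or> (n-1) mod 4 = 2 then -1 else 1)"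
    proof -
      have "n - 1 < n" "n-1 \<ge> 1" using n2 by auto
      from less.IH[OF this] show ?thesis .
    qed
    show ?thesis
    proof (cases "even n")
      case True
      let ?S = "{j. j < n \<and> odd j}"
      let ?q = "[:real n / 2:] + (\<Sum>j\<in>?S. ep j)"
      have h: "degree ?q = n - 1 \<and> lead_coeff ?q = lead_coeff (ep (n-1))"
      proof (rule sum_helper)
        have "odd (n-1)" by (rule m4g[OF n2 True])
        then show "n-1 \<in> ?S" using n2 by simp
        show "n-1 \<ge> 1" using n2 by simp
        show "degree (ep (n-1)) = n-1" using IHm by (rule conjunct1)
      next
        fix j assume "j \<in> ?S" then have "j < n" by simp then show "j \<le> n-1" by linarith
      next
        fix j assume "j \<in> ?S" then show "degree (ep j) \<le> j" using dle by simp
      qed simp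
      have lnz: "lead_coeff (ep (n-1)) \<noteq> 0" by (subst conjunct2[OF IHm]) simp
      have q0: "?q \<noteq> 0"
      proof
        assume "?q = 0"
        then have "lead_coeff ?q = 0" by simp
        then show False using conjunct2[OF h] lnz by (simp only:)
      qed
      have e: "ep n = pCons 0 ?q" using True by (subst ep.simps) simp
      have "degree (ep n) = Suc (n-1)" unfolding e
        by (simp only: degree_minus degree_pCons_eq[OF q0] conjunct1[OF h])
      then have d: "degree (ep n) = n" using n2 by simp
      have l: "lead_coeff (ep n) = lead_coeff (ep (n-1))"
        unfolding e by (rule trans[OF lead_coeff_pCons(1)[OF q0] conjunct2[OF h]])
      have "n mod 4 = 0 \<or> n mod 4 = 2" by (rule m4e[OF True])
      then show ?thesis
      proof
        assume a: "n mod 4 = 0"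
        then have "(n-1) mod 4 = 3" using n2 by (intro m4a) auto
        then have L: "lead_coeff (ep (n-1)) = 1" by (subst conjunct2[OF IHm]) simp
        show ?thesis
        proof (intro conjI d)
          show "lead_coeff (ep n) = (if n mod 4 = 1 \<or> n mod 4 = 2 then -1 else 1)"
            by (subst l, subst L) (use a in simp)
        qed
      next
        assume a: "n mod 4 = 2"
        then have "(n-1) mod 4 = 1" using n2 by (intro m4b) auto
        then have L: "lead_coeff (ep (n-1)) = - 1" by (subst conjunct2[OF IHm]) simp
        show ?thesis
        proof (intro conjI d)
          show "lead_coeff (ep n) = (if n mod 4 = 1 \<or> n mod 4 = 2 then -1 else 1)"
            by (subst l, subst L) (use a in simp)
        qed
      qed
    next
      case False
      let ?S = "{j. j < n \<and> even j}"
      let ?q = "[:real (n+1) / 2:] + (\<Sum>j\<in>?S. ep j)"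
      have h: "degree ?q = n - 1 \<and> lead_coeff ?q = lead_coeff (ep (n-1))"
      proof (rule sum_helper)
        have "even (n-1)" by (rule m4h[OF n2 False])
        then show "n-1 \<in> ?S" using n2 by simp
        show "n-1 \<ge> 1" using n2 by simp
        show "degree (ep (n-1)) = n-1" using IHm by (rule conjunct1)
      next
        fix j assume "j \<in> ?S" then have "j < n" by simp then show "j \<le> n-1" by linarith
      next
        fix j assume "j \<in> ?S" then show "degree (ep j) \<le> j" using dle by simp
      qed simp
      have lnz: "lead_coeff (ep (n-1)) \<noteq> 0" by (subst conjunct2[OF IHm]) simp
      have q0: "?q \<noteq> 0"
      proof
        assume "?q = 0"
        then have "lead_coeff ?q = 0" by simp
        then show False using conjunct2[OF h] lnz by (simp only:)
      qed
      have e: "ep n = - pCons 0 ?q" using False by (subst ep.simps) simp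
      have "degree (ep n) = Suc (n-1)" unfolding e
        by (simp only: degree_minus degree_pCons_eq[OF q0] conjunct1[OF h])
      then have d: "degree (ep n) = n" using n2 by simp
      have l: "lead_coeff (ep n) = - lead_coeff (ep (n-1))"
        unfolding e lead_coeff_minus by (rule arg_cong[where f=uminus], rule trans[OF lead_coeff_pCons(1)[OF q0] conjunct2[OF h]])
      have "n mod 4 = 1 \<or> n mod 4 = 3" by (rule m4f[OF False])
      then show ?thesis
      proof
        assume a: "n mod 4 = 1"
        then have "(n-1) mod 4 = 0" using n2 by (intro m4c) auto
        then have L: "lead_coeff (ep (n-1)) = 1" by (subst conjunct2[OF IHm]) simp
        show ?thesis
        proof (intro conjI d)
          show "lead_coeff (ep n) = (if n mod 4 = 1 \<or> n mod 4 = 2 then -1 else 1)"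
            by (subst l, subst L) (use a in simp)
        qed
      next
        assume a: "n mod 4 = 3"
        then have "(n-1) mod 4 = 2" using n2 by (intro m4d) auto
        then have L: "lead_coeff (ep (n-1)) = - 1" by (subst conjunct2[OF IHm]) simp
        show ?thesis
        proof (intro conjI d)
          show "lead_coeff (ep n) = (if n mod 4 = 1 \<or> n mod 4 = 2 then -1 else 1)"
            by (subst l, subst L) (use a in simp)
        qed
      qed
    qed
  qed
qed

fun dp :: "nat \<Rightarrow> real poly" where
  "dp 0 = 0"
| "dp (Suc 0) = 1"
| "dp (Suc (Suc m)) = dp (Suc m) + 1 + ep (Suc m)"

lemma phi_deriv: "n \<ge> 1 \<Longrightarrow> ((\<lambda>x. phi A x n) has_real_derivative poly (dp n) A) (at 1)"
proof (induction n rule: dp.induct)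
  case 1 then show ?case by simp
next
  case 2 then show ?case by (auto intro!: derivative_eq_intros)
next
  case (3 m)
  have IH: "((\<lambda>x. phi A x (Suc m)) has_real_derivative poly (dp (Suc m)) A) (at 1)"
    using 3 by simp
  have D: "((\<lambda>x. phi A x (Suc m) - 1 + x * E A x (Suc m)) has_real_derivative
     (poly (dp (Suc m)) A - 0 + (1 * E A 1 (Suc m) + poly (ep (Suc m)) A * 1))) (at 1)"
    by (intro DERIV_add DERIV_diff DERIV_mult IH E_deriv DERIV_ident DERIV_const)
  show ?case using D by (simp add: E_at1 algebra_simps)
qed

lemma dp_deg: "n \<ge> 1 \<Longrightarrow> degree (dp n) = n - 1 \<and>
   lead_coeff (dp n) = (if n mod 4 = 0 \<or> n mod 4 = 1 then 1 else -1)"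
proof (induction n rule: dp.induct)
  case 1 then show ?case by simp
next
  case 2 then show ?case by simp
next
  case (3 m)
  have d1: "degree (dp (Suc m) + 1) \<le> m"
  proof (cases m)
    case 0 then show ?thesis by simp
  next
    case (Suc k)
    then have "degree (dp (Suc m)) = m" using 3 by simp
    then show ?thesis using Suc
      by (intro degree_add_le) auto
  qed
  have E: "degree (ep (Suc m)) = Suc m \<and> lead_coeff (ep (Suc m)) =
      (if Suc m mod 4 = 1 \<or> Suc m mod 4 = 2 then -1 else 1)"
    by (rule ep_deg) simp
  have lt: "degree (dp (Suc m) + 1) < degree (ep (Suc m))" using d1 E by simp
  have "dp (Suc (Suc m)) = (dp (Suc m) + 1) + ep (Suc m)" by simp
  then have d: "degree (dp (Suc (Suc m))) = Suc m" and
    l: "lead_coeff (dp (Suc (Suc m))) = lead_coeff (ep (Suc m))"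
    using degree_add_eq_right[OF lt] lead_coeff_add_le[OF lt] E by (simp_all only:)
  have X: "(if P then -1 else 1::real) = (if Q then 1 else -1)" if "P \<longleftrightarrow> \<not> Q" for P Q
    using that by auto
  show ?case
  proof (rule conjI)
    show "degree (dp (Suc (Suc m))) = Suc (Suc m) - 1" using d by simp
    show "lead_coeff (dp (Suc (Suc m))) =
      (if Suc (Suc m) mod 4 = 0 \<or> Suc (Suc m) mod 4 = 1 then 1 else - 1)"
      by (rule trans[OF trans[OF l conjunct2[OF E]] X]) (rule m4i)
  qed
qed

theorem lemma4p5:
  fixes n :: nat
  assumes "n \<ge> 1"
  shows "\<exists>p :: real poly.
           (\<forall>A. ((\<lambda>x. phi A x n) has_real_derivative poly p A) (at 1)) \<and>
           degree p = n - 1 \<and>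
           lead_coeff p = (if n mod 4 = 0 \<or> n mod 4 = 1 then 1 else -1)"
  using phi_deriv[OF assms] dp_deg[OF assms] by blast

end
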